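(* Let $m\ge3$ and let $\{X_n\}$ be a sequence of finite connected $2$-connected graphs such that for each $n$ the number $N_n$ of maximal spanning trees of $X_n$ not containing a given edge is independent of the edge, and $\mathrm{girth}(X_n)\to\infty$. Let $\widetilde{X}_n$ be the $\mathbb{Z}_m$-homology cover of $X_n$. Let $d$ be the coarse disjoint union metric on $\bigsqcup_n\widetilde{X}_n$ restricting to the graph metric on each $\widetilde{X}_n$, and $d_Q$ the coarse disjoint union metric restricting to $d_{Q_n}$ on each $\widetilde{X}_n$. Then the identity map $(\bigsqcup_n\widetilde{X}_n,d)\to(\bigsqcup_n\widetilde{X}_n,d_Q)$ is a coarse equivalence, i.e. it and its inverse are coarse embeddings.
   Context: A graph is $2$-connected if removing any single edge leaves it connected; girth is the length of a shortest cycle. $\mathbb{Z}_m$-homology cover of a finite connected graph $X$: fix orientations of the edges; for a maximal spanning tree $T$ with complementary edges $e_1,\dots,e_r$ (a free basis of $\pi_1(X)$), let $\rho:\pi_1(X)\to K=\pi_1(X)/[\pi_1(X),\pi_1(X)]\pi_1(X)^m\cong\oplus^r\mathbb{Z}_m$; $\widetilde{X}$ has vertices $V(X)\times K$, edges $E(X)\times K$, where for $e$ from $v$ to $w$ the edge $(e,k)$ joins $(v,k)$ to $(w,k)$ if $e\in T$ and to $(w,\rho(e)k)$ if $e\notin T$. For a maximal tree $T$, clouds are the sets $V(X)\times\{k\}$; $C^T_x$ is the cloud containing $x$, identified with an element of $\oplus^r\mathbb{Z}_m$; $d_T$ is the word metric on $\oplus^r\mathbb{Z}_m$ with respect to $\rho(e_1),\dots,\rho(e_r)$.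 On $\widetilde{X}_n$, $d_{Q_n}(x,y)=\frac{1}{N_n}\sum_T d_T(C^T_x,C^T_y)$, summing over all maximal spanning trees $T$ of $X_n$. A coarse disjoint union metric restricts to the given metric on each component, with distances between distinct components larger than their diameters and tending to infinity. A coarse embedding is a map with non-decreasing $\rho_\pm\to\infty$ and $\rho_-(d(x,x'))\le d'(F(x),F(x'))\le\rho_+(d(x,x'))$. *)

theory Defs
  imports Main "HOL-Library.Extended_Nat"
begin

text \<open>A graph is given by a vertex set V, an edge set E and maps s, t giving
  the (fixed) orientation of each edge: edge e goes from s e to t e.
  Multiple edges and loops are allowed.\<close>

definition mg_wf :: "'v set \<Rightarrow> 'e set \<Rightarrow> ('e \<Rightarrow> 'v) \<Rightarrow> ('e \<Rightarrow> 'v) \<Rightarrow> bool" where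
  "mg_wf V E s t \<longleftrightarrow> finite V \<and> finite E \<and> (\<forall>e\<in>E. s e \<in> V \<and> t e \<in> V)"

definition mg_adj :: "'e set \<Rightarrow> ('e \<Rightarrow> 'v) \<Rightarrow> ('e \<Rightarrow> 'v) \<Rightarrow> 'v \<Rightarrow> 'v \<Rightarrow> bool" where
  "mg_adj E s t u w \<longleftrightarrow> (\<exists>e\<in>E. (s e = u \<and> t e = w) \<or> (s e = w \<and> t e = u))"

definition mg_connected :: "'v set \<Rightarrow> 'e set \<Rightarrow> ('e \<Rightarrow> 'v) \<Rightarrow> ('e \<Rightarrow> 'v) \<Rightarrow> bool" where
  "mg_connected V E s t \<longleftrightarrow> V \<noteq> {} \<and> (\<forall>u\<in>V. \<forall>w\<in>V. (mg_adj E s t)\<^sup>*\<^sup>* u w)"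

definition mg_2connected :: "'v set \<Rightarrow> 'e set \<Rightarrow> ('e \<Rightarrow> 'v) \<Rightarrow> ('e \<Rightarrow> 'v) \<Rightarrow> bool" where
  "mg_2connected V E s t \<longleftrightarrow> (\<forall>e\<in>E. mg_connected V (E - {e}) s t)"

definition mg_cycle :: "'e set \<Rightarrow> ('e \<Rightarrow> 'v) \<Rightarrow> ('e \<Rightarrow> 'v) \<Rightarrow> 'e list \<Rightarrow> 'v list \<Rightarrow> bool" where
  "mg_cycle E s t es vs \<longleftrightarrow> length es \<ge> 1 \<and> length vs = length es \<and>
     distinct es \<and> distinct vs \<and> set es \<subseteq> E \<and>
     (\<forall>i < length es. (s (es ! i) = vs ! i \<and> t (es ! i) = vs ! ((i + 1) mod length es)) \<or>
                      (t (es ! i) = vs ! i \<and> s (es ! i) = vs ! ((i + 1) mod length es)))"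

definition mg_girth :: "'e set \<Rightarrow> ('e \<Rightarrow> 'v) \<Rightarrow> ('e \<Rightarrow> 'v) \<Rightarrow> enat" where
  "mg_girth E s t = (INF es \<in> {es. \<exists>vs. mg_cycle E s t es vs}. enat (length es))"

definition mg_spanning_tree :: "'v set \<Rightarrow> 'e set \<Rightarrow> ('e \<Rightarrow> 'v) \<Rightarrow> ('e \<Rightarrow> 'v) \<Rightarrow> 'e set \<Rightarrow> bool" where
  "mg_spanning_tree V E s t T \<longleftrightarrow> T \<subseteq> E \<and> mg_connected V T s t \<and>
     \<not> (\<exists>es vs. mg_cycle T s t es vs)"

text \<open>Canonical model of the Z_m-homology cover: a vertex is a pair (v, c)
  where c is a Z_m-valued 1-chain (values in {0..<m}, supported on E) with
  boundary v - b, b a fixed base vertex.  (v,c) corresponds to the class of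
  walks from b to v with signed edge-count chain c mod m.  An edge e from v to w
  lifts to edges from (v,c) to (w, c + e).  For any maximal tree T with
  complementary edges e_1..e_r, the map (v,c) |-> (v, (c e_1, ..., c e_r)) is an
  isomorphism onto the cover built from T as in the paper, so the T-clouds are
  the fibres of c |-> c restricted to E - T.\<close>

definition hc_base :: "'v set \<Rightarrow> 'v" where
  "hc_base V = (SOME v. v \<in> V)"

definition hc_verts :: "nat \<Rightarrow> 'v set \<Rightarrow> 'e set \<Rightarrow> ('e \<Rightarrow> 'v) \<Rightarrow> ('e \<Rightarrow> 'v) \<Rightarrow> ('v \<times> ('e \<Rightarrow> int)) set" where
  "hc_verts m V E s t = {(v, c). v \<in> V \<and> (\<forall>e. c e \<in> {0..<int m}) \<and> (\<forall>e. e \<notin> E \<longrightarrow> c e = 0) \<and>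
     (\<forall>u\<in>V. ((\<Sum>e\<in>{e\<in>E. t e = u}. c e) - (\<Sum>e\<in>{e\<in>E. s e = u}. c e)) mod int m =
              ((if u = v then 1 else 0) - (if u = hc_base V then 1 else 0)) mod int m)}"

definition hc_adj :: "nat \<Rightarrow> 'v set \<Rightarrow> 'e set \<Rightarrow> ('e \<Rightarrow> 'v) \<Rightarrow> ('e \<Rightarrow> 'v) \<Rightarrow>
    ('v \<times> ('e \<Rightarrow> int)) \<Rightarrow> ('v \<times> ('e \<Rightarrow> int)) \<Rightarrow> bool" where
  "hc_adj m V E s t x y \<longleftrightarrow> x \<in> hc_verts m V E s t \<and> y \<in> hc_verts m V E s t \<and>
     (\<exists>e\<in>E. (s e = fst x \<and> t e = fst y \<and> snd y = (snd x)(e := (snd x e + 1) mod int m)) \<or>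
            (s e = fst y \<and> t e = fst x \<and> snd x = (snd y)(e := (snd y e + 1) mod int m)))"

definition graph_dist :: "('a \<Rightarrow> 'a \<Rightarrow> bool) \<Rightarrow> 'a \<Rightarrow> 'a \<Rightarrow> real" where
  "graph_dist R x y = real (LEAST k. (R ^^ k) x y)"

text \<open>Word metric on the group of functions I -> Z_m (direct sum of copies of
  Z_m indexed by I) with respect to the standard generators (unit vectors) and
  their inverses.\<close>
definition apply_letter :: "nat \<Rightarrow> 'e \<times> bool \<Rightarrow> ('e \<Rightarrow> int) \<Rightarrow> ('e \<Rightarrow> int)" where
  "apply_letter m l a = a(fst l := (a (fst l) + (if snd l then 1 else -1)) mod int m)"

definition word_dist :: "nat \<Rightarrow> 'e set \<Rightarrow> ('e \<Rightarrow> int) \<Rightarrow> ('e \<Rightarrow> int) \<Rightarrow> nat" where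
  "word_dist m I a a' = (LEAST k. \<exists>w. length w = k \<and> (\<forall>l\<in>set w. fst l \<in> I) \<and> fold (apply_letter m) w a = a')"

text \<open>The cloud C^T_x of a cover vertex x = (v,c), as an element of the direct
  sum of copies of Z_m indexed by the complementary edges E - T.\<close>
definition cloud :: "'e set \<Rightarrow> 'e set \<Rightarrow> ('v \<times> ('e \<Rightarrow> int)) \<Rightarrow> ('e \<Rightarrow> int)" where
  "cloud E T x = (\<lambda>e. if e \<in> E - T then snd x e else 0)"

definition dT :: "nat \<Rightarrow> 'e set \<Rightarrow> 'e set \<Rightarrow> ('v \<times> ('e \<Rightarrow> int)) \<Rightarrow> ('v \<times> ('e \<Rightarrow> int)) \<Rightarrow> nat" where
  "dT m E T x y = word_dist m (E - T) (cloud E T x) (cloud E T y)"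

definition dQ :: "nat \<Rightarrow> nat \<Rightarrow> 'v set \<Rightarrow> 'e set \<Rightarrow> ('e \<Rightarrow> 'v) \<Rightarrow> ('e \<Rightarrow> 'v) \<Rightarrow>
    ('v \<times> ('e \<Rightarrow> int)) \<Rightarrow> ('v \<times> ('e \<Rightarrow> int)) \<Rightarrow> real" where
  "dQ m N V E s t x y = (1 / real N) * (\<Sum>T\<in>{T. mg_spanning_tree V E s t T}. real (dT m E T x y))"

definition metric_on :: "'a set \<Rightarrow> ('a \<Rightarrow> 'a \<Rightarrow> real) \<Rightarrow> bool" where
  "metric_on S d \<longleftrightarrow> (\<forall>x\<in>S. \<forall>y\<in>S. 0 \<le> d x y \<and> d x y = d y x \<and> (d x y = 0 \<longleftrightarrow> x = y)) \<and>
     (\<forall>x\<in>S. \<forall>y\<in>S. \<forall>z\<in>S. d x z \<le> d x y + d y z)"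

definition disj_union :: "(nat \<Rightarrow> 'a set) \<Rightarrow> (nat \<times> 'a) set" where
  "disj_union X = (SIGMA n:UNIV. X n)"

definition coarse_disj_union_metric ::
    "(nat \<Rightarrow> 'a set) \<Rightarrow> (nat \<Rightarrow> 'a \<Rightarrow> 'a \<Rightarrow> real) \<Rightarrow> (nat \<times> 'a \<Rightarrow> nat \<times> 'a \<Rightarrow> real) \<Rightarrow> bool" where
  "coarse_disj_union_metric X dn d \<longleftrightarrow>
     metric_on (disj_union X) d \<and>
     (\<forall>n. \<forall>x\<in>X n. \<forall>y\<in>X n. d (n, x) (n, y) = dn n x y) \<and>
     (\<forall>n n'. n \<noteq> n' \<longrightarrow> (\<forall>x\<in>X n. \<forall>y\<in>X n'.
        (\<forall>a\<in>X n. \<forall>b\<in>X n. dn n a b < d (n, x) (n', y)) \<and>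
        (\<forall>a\<in>X n'. \<forall>b\<in>X n'. dn n' a b < d (n, x) (n', y)))) \<and>
     (\<forall>R. \<exists>N. \<forall>n n'. n \<noteq> n' \<and> (N \<le> n \<or> N \<le> n') \<longrightarrow>
        (\<forall>x\<in>X n. \<forall>y\<in>X n'. R \<le> d (n, x) (n', y)))"

definition coarse_embedding :: "'a set \<Rightarrow> ('a \<Rightarrow> 'a \<Rightarrow> real) \<Rightarrow> ('b \<Rightarrow> 'b \<Rightarrow> real) \<Rightarrow> ('a \<Rightarrow> 'b) \<Rightarrow> bool" where
  "coarse_embedding S d d' F \<longleftrightarrow>
     (\<exists>rho_m rho_p :: real \<Rightarrow> real. mono rho_m \<and> mono rho_p \<and>
        filterlim rho_m at_top at_top \<and> filterlim rho_p at_top at_top \<and>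
        (\<forall>x\<in>S. \<forall>x'\<in>S. rho_m (d x x') \<le> d' (F x) (F x') \<and> d' (F x) (F x') \<le> rho_p (d x x')))"

end

theory Submission
  imports Defs
begin

definition bd :: "'e set \<Rightarrow> ('e \<Rightarrow> 'v) \<Rightarrow> ('e \<Rightarrow> 'v) \<Rightarrow> ('e \<Rightarrow> int) \<Rightarrow> 'v \<Rightarrow> int" where
  "bd E s t c u = (\<Sum>e\<in>{e\<in>E. t e = u}. c e) - (\<Sum>e\<in>{e\<in>E. s e = u}. c e)"

lemma hc_verts_iff:
  "(v, c) \<in> hc_verts m V E s t \<longleftrightarrow> v \<in> V \<and> (\<forall>e. c e \<in> {0..<int m}) \<and> (\<forall>e. e \<notin> E \<longrightarrow> c e = 0) \<and>
     (\<forall>u\<in>V. bd E s t c u mod int m = ((if u = v then 1 else 0) - (if u = hc_base V then 1 else 0)) mod int m)"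
  unfolding hc_verts_def bd_def by simp

lemma sum_upd:
  fixes c :: "'e \<Rightarrow> int"
  assumes "finite A"
  shows "(\<Sum>e\<in>A. (c(e0 := x)) e) = (\<Sum>e\<in>A. c e) + (if e0 \<in> A then x - c e0 else 0)"
proof -
  have "(\<Sum>e\<in>A. (c(e0 := x)) e) = (\<Sum>e\<in>A. c e + (if e = e0 then x - c e0 else 0))"
    by (rule sum.cong) auto
  also have "\<dots> = (\<Sum>e\<in>A. c e) + (\<Sum>e\<in>A. (if e = e0 then x - c e0 else 0))"
    by (rule sum.distrib)
  also have "(\<Sum>e\<in>A. (if e = e0 then x - c e0 else 0)) = (if e0 \<in> A then x - c e0 else 0)"
    using assms by (simp add: sum.delta')
  finally show ?thesis .
qed

lemma bd_upd:
  assumes "finite E" "e0 \<in> E"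
  shows "bd E s t (c(e0 := x)) u = bd E s t c u + (x - c e0) * ((if t e0 = u then 1 else 0) - (if s e0 = u then 1 else 0))"
proof -
  have f1: "finite {e\<in>E. t e = u}" "finite {e\<in>E. s e = u}" using assms(1) by auto
  show ?thesis using assms unfolding bd_def sum_upd[OF f1(1)] sum_upd[OF f1(2)] by (simp add: algebra_simps)
qed

lemma hc_step_gen:
  assumes "(u, c) \<in> hc_verts m V E s t" "mg_wf V E s t" "e0 \<in> E" "m > 0"
    and x: "x \<in> {0..<int m}" and k: "(x - c e0) mod int m = k mod int m"
    and u': "u' \<in> V"
    and kk: "\<And>z. z \<in> V \<Longrightarrow> ((if z = u then 1 else 0) + k * ((if t e0 = z then 1 else 0) - (if s e0 = z then 1 else 0))) mod int m = (if z = u' then 1 else 0) mod int m"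
  shows "(u', c(e0 := x)) \<in> hc_verts m V E s t"
proof -
  have fE: "finite E" using assms(2) unfolding mg_wf_def by auto
  note H = assms(1)[unfolded hc_verts_iff]
  show ?thesis unfolding hc_verts_iff
  proof (intro conjI ballI allI impI)
    show "u' \<in> V" by fact
    fix e show "(c(e0 := x)) e \<in> {0..<int m}" using H x by auto
  next
    fix e assume "e \<notin> E" then show "(c(e0 := x)) e = 0" using H assms(3) by auto
  next
    fix z assume z: "z \<in> V"
    let ?a = "(if t e0 = z then 1 else 0) - (if s e0 = z then (1::int) else 0)"
    let ?b = "(if z = hc_base V then 1 else (0::int))"
    have "bd E s t (c(e0 := x)) z mod int m = (bd E s t c z + (x - c e0) * ?a) mod int m"
      by (simp only: bd_upd[OF fE assms(3)])
    also have "\<dots> = (bd E s t c z mod int m + ((x - c e0) mod int m) * ?a) mod int m"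
      by (metis mod_add_eq mod_mult_left_eq mod_mod_trivial)
    also have "\<dots> = ((((if z = u then 1 else 0) - ?b) mod int m) + (k mod int m) * ?a) mod int m"
      using H z k by simp
    also have "\<dots> = (((if z = u then 1 else 0) + k * ?a) - ?b) mod int m"
      by (metis (no_types, lifting) diff_add_eq mod_add_eq mod_mult_left_eq mod_mod_trivial)
    also have "\<dots> = ((((if z = u then 1 else 0) + k * ?a) mod int m) - ?b) mod int m"
      by (simp add: mod_diff_left_eq)
    also have "\<dots> = (((if z = u' then 1 else 0) mod int m) - ?b) mod int m"
      using kk[OF z] by simp
    also have "\<dots> = ((if z = u' then 1 else 0) - ?b) mod int m"
      by (simp add: mod_diff_left_eq)
    finally show "bd E s t (c(e0 := x)) z mod int m = ((if z = u' then 1 else 0) - ?b) mod int m" .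
  qed
qed

lemma hc_step_fwd:
  assumes "(u, c) \<in> hc_verts m V E s t" "mg_wf V E s t" "e0 \<in> E" "m > 0" "s e0 = u"
  shows "(t e0, c(e0 := (c e0 + 1) mod int m)) \<in> hc_verts m V E s t"
proof (rule hc_step_gen[OF assms(1-4), where k=1])
  show "(c e0 + 1) mod int m \<in> {0..<int m}" using assms(4) by simp
  show "((c e0 + 1) mod int m - c e0) mod int m = 1 mod int m"
    by (simp add: mod_diff_left_eq)
  show "t e0 \<in> V" using assms(2,3) unfolding mg_wf_def by auto
  fix z show "((if z = u then 1 else 0) + 1 * ((if t e0 = z then 1 else 0) - (if s e0 = z then 1 else 0))) mod int m =
          (if z = t e0 then 1 else 0) mod int m"
    using assms(5) by auto
qed

lemma hc_step_bwd:
  assumes "(u, c) \<in> hc_verts m V E s t" "mg_wf V E s t" "e0 \<in> E" "m > 0" "t e0 = u"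
  shows "(s e0, c(e0 := (c e0 - 1) mod int m)) \<in> hc_verts m V E s t"
proof (rule hc_step_gen[OF assms(1-4), where k="-1"])
  show "(c e0 - 1) mod int m \<in> {0..<int m}" using assms(4) by simp
  show "((c e0 - 1) mod int m - c e0) mod int m = -1 mod int m"
    by (simp add: mod_diff_left_eq)
  show "s e0 \<in> V" using assms(2,3) unfolding mg_wf_def by auto
  fix z show "((if z = u then 1 else 0) + -1 * ((if t e0 = z then 1 else 0) - (if s e0 = z then 1 else 0))) mod int m =
          (if z = s e0 then 1 else 0) mod int m"
    using assms(5) by auto
qed


definition spath :: "'e set \<Rightarrow> ('e \<Rightarrow> 'v) \<Rightarrow> ('e \<Rightarrow> 'v) \<Rightarrow> 'e list \<Rightarrow> 'v list \<Rightarrow> bool" where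
  "spath S s t es vs \<longleftrightarrow> length vs = Suc (length es) \<and> distinct es \<and> distinct vs \<and> set es \<subseteq> S \<and>
     (\<forall>i<length es. (s (es!i) = vs!i \<and> t (es!i) = vs!Suc i) \<or> (t (es!i) = vs!i \<and> s (es!i) = vs!Suc i))"

definition is_leaf :: "'e set \<Rightarrow> ('e \<Rightarrow> 'v) \<Rightarrow> ('e \<Rightarrow> 'v) \<Rightarrow> 'v \<Rightarrow> 'e \<Rightarrow> bool" where
  "is_leaf S s t z e0 \<longleftrightarrow> e0 \<in> S \<and> (s e0 = z \<or> t e0 = z) \<and> s e0 \<noteq> t e0 \<and>
     (\<forall>e\<in>S. (s e = z \<or> t e = z) \<longrightarrow> e = e0)"

lemma spath_rev:
  assumes "spath S s t es vs"
  shows "spath S s t (rev es) (rev vs)"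
proof -
  let ?L = "length es"
  have len: "length vs = Suc ?L" using assms unfolding spath_def by auto
  have "(s (rev es!i) = rev vs!i \<and> t (rev es!i) = rev vs!Suc i) \<or> (t (rev es!i) = rev vs!i \<and> s (rev es!i) = rev vs!Suc i)"
    if i: "i < ?L" for i
  proof -
    have j: "?L - Suc i < ?L" using i by auto
    have "(s (es!(?L - Suc i)) = vs!(?L - Suc i) \<and> t (es!(?L - Suc i)) = vs!Suc (?L - Suc i)) \<or>
          (t (es!(?L - Suc i)) = vs!(?L - Suc i) \<and> s (es!(?L - Suc i)) = vs!Suc (?L - Suc i))"
      using assms j unfolding spath_def by blast
    moreover have "rev es ! i = es!(?L - Suc i)" using i by (simp add: rev_nth)
    moreover have "rev vs ! i = vs!Suc (?L - Suc i)" using i len by (simp add: rev_nth Suc_diff_Suc)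
    moreover have "rev vs ! Suc i = vs!(?L - Suc i)" using i len by (simp add: rev_nth)
    ultimately show ?thesis by auto
  qed
  then show ?thesis using assms unfolding spath_def by auto
qed

lemma cycle_mono: "mg_cycle S s t es vs \<Longrightarrow> S \<subseteq> S' \<Longrightarrow> mg_cycle S' s t es vs"
  unfolding mg_cycle_def by auto

lemma maxpath_leaf:
  assumes p: "spath S s t es vs" and ne: "es \<noteq> []"
    and mx: "\<And>es' vs'. spath S s t es' vs' \<Longrightarrow> length es' \<le> length es"
    and ac: "\<not> (\<exists>es vs. mg_cycle S s t es vs)"
  shows "is_leaf S s t (last vs) (last es)"
proof -
  let ?L = "length es"
  have len: "length vs = Suc ?L" and des: "distinct es" and dvs: "distinct vs" and sub: "set es \<subseteq> S"
    and adj: "\<And>i. i < ?L \<Longrightarrow> (s (es!i) = vs!i \<and> t (es!i) = vs!Suc i) \<or> (t (es!i) = vs!i \<and> s (es!i) = vs!Suc i)"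
    using p unfolding spath_def by auto
  have L0: "?L > 0" using ne by auto
  have "vs \<noteq> []" using len by auto
  then have lastvs: "last vs = vs ! ?L" using len by (simp add: last_conv_nth)
  have lastes: "last es = es ! (?L - 1)" using ne by (simp add: last_conv_nth)
  have ladj: "(s (last es) = vs!(?L-1) \<and> t (last es) = vs!?L) \<or> (t (last es) = vs!(?L-1) \<and> s (last es) = vs!?L)"
    using adj[of "?L - 1"] L0 lastes by auto
  have "?L - 1 \<noteq> ?L" "?L - 1 < length vs" "?L < length vs" using L0 len by arith+
  then have neq: "vs!(?L-1) \<noteq> vs!?L" using dvs by (simp add: nth_eq_iff_index_eq)
  have inS: "last es \<in> S" using sub ne by auto
  have other: "e = last es" if eS: "e \<in> S" and inc: "s e = last vs \<or> t e = last vs" for e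
  proof (rule ccontr)
    assume ne2: "e \<noteq> last es"
    define z where "z = (if s e = last vs then t e else s e)"
    have ez: "(s e = vs!?L \<and> t e = z) \<or> (t e = vs!?L \<and> s e = z)" using inc lastvs z_def by auto
    have enot: "e \<notin> set es"
    proof
      assume "e \<in> set es"
      then obtain i where i: "i < ?L" "es!i = e" by (auto simp: in_set_conv_nth)
      have "vs!?L = vs!i \<or> vs!?L = vs!Suc i" using adj[OF i(1)] i(2) ez by auto
      then have "?L = i \<or> ?L = Suc i" using dvs len i(1) by (auto simp: nth_eq_iff_index_eq)
      then have "i = ?L - 1" using i(1) by auto
      then show False using i(2) lastes ne2 by auto
    qed
    show False
    proof (cases "z \<in> set vs")
      case False
      have "spath S s t (es @ [e]) (vs @ [z])"
        unfolding spath_def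
      proof (intro conjI allI impI)
        show "length (vs @ [z]) = Suc (length (es @ [e]))" using len by simp
        show "distinct (es @ [e])" using des enot by simp
        show "distinct (vs @ [z])" using dvs False by simp
        show "set (es @ [e]) \<subseteq> S" using sub eS by simp
        fix i assume i: "i < length (es @ [e])"
        show "s ((es @ [e]) ! i) = (vs @ [z]) ! i \<and> t ((es @ [e]) ! i) = (vs @ [z]) ! Suc i \<or>
              t ((es @ [e]) ! i) = (vs @ [z]) ! i \<and> s ((es @ [e]) ! i) = (vs @ [z]) ! Suc i"
        proof (cases "i < ?L")
          case True then show ?thesis using adj[OF True] len by (simp add: nth_append)
        next
          case False then have "i = ?L" using i by simp
          then show ?thesis using ez len by (simp add: nth_append)
        qed
      qed
      from mx[OF this] show False by simp
    next
      case True
      then obtain j where j: "j < length vs" "vs!j = z" by (auto simp: in_set_conv_nth)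
      have jL: "j \<le> ?L" using j len by simp
      have "mg_cycle S s t (drop j es @ [e]) (drop j vs)"
        unfolding mg_cycle_def
      proof (intro conjI allI impI)
        show "1 \<le> length (drop j es @ [e])" by simp
        show "length (drop j vs) = length (drop j es @ [e])" using len jL by simp
        show "distinct (drop j es @ [e])" using des enot by (auto dest: in_set_dropD)
        show "distinct (drop j vs)" using dvs by simp
        show "set (drop j es @ [e]) \<subseteq> S" using sub eS by (auto dest: in_set_dropD)
        fix i assume i: "i < length (drop j es @ [e])"
        have ll: "length (drop j es @ [e]) = Suc (?L - j)" using jL by simp
        show "s ((drop j es @ [e]) ! i) = drop j vs ! i \<and>
             t ((drop j es @ [e]) ! i) = drop j vs ! ((i + 1) mod length (drop j es @ [e])) \<or>
             t ((drop j es @ [e]) ! i) = drop j vs ! i \<and>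
             s ((drop j es @ [e]) ! i) = drop j vs ! ((i + 1) mod length (drop j es @ [e]))"
        proof (cases "i < ?L - j")
          case True
          then have md: "(i + 1) mod length (drop j es @ [e]) = Suc i" using ll by simp
          have "j + i < ?L" using True by simp
          from adj[OF this] show ?thesis using True jL len md by (simp add: nth_append)
        next
          case False
          then have ii: "i = ?L - j" using i ll by simp
          then have md: "(i + 1) mod length (drop j es @ [e]) = 0" using ll by simp
          show ?thesis using ez ii md jL len j(2) by (simp add: nth_append)
        qed
      qed
      then show False using ac by blast
    qed
  qed
  have "s (last es) = last vs \<or> t (last es) = last vs" using ladj unfolding lastvs by blast
  moreover have "s (last es) \<noteq> t (last es)" using ladj neq by metis
  ultimately show ?thesis unfolding is_leaf_def using inS other by blast
qed

lemma two_leaves: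
  assumes fin: "finite S" and ne: "S \<noteq> {}" and ac: "\<not> (\<exists>es vs. mg_cycle S s t es vs)"
  shows "\<exists>z1 z2 e1 e2. z1 \<noteq> z2 \<and> is_leaf S s t z1 e1 \<and> is_leaf S s t z2 e2"
proof -
  obtain e where e: "e \<in> S" using ne by auto
  have "s e \<noteq> t e"
  proof
    assume "s e = t e"
    then have "mg_cycle S s t [e] [s e]" using e unfolding mg_cycle_def by auto
    then show False using ac by blast
  qed
  then have p0: "spath S s t [e] [s e, t e]" using e unfolding spath_def by (auto simp: nth_Cons')
  let ?P = "\<lambda>k. \<exists>es vs. spath S s t es vs \<and> length es = k"
  have bnd: "\<forall>k. ?P k \<longrightarrow> k \<le> card S"
  proof (intro allI impI)
    fix k assume "?P k"
    then obtain es vs where "spath S s t es vs" "length es = k" by blast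
    then have "distinct es" "set es \<subseteq> S" unfolding spath_def by auto
    then show "k \<le> card S" using \<open>length es = k\<close> fin by (metis card_mono distinct_card)
  qed
  obtain k where k: "?P k" "\<forall>y. ?P y \<longrightarrow> y \<le> k"
    using Nat.ex_has_greatest_nat[of ?P 1 "card S"] p0 bnd by force
  then obtain es vs where p: "spath S s t es vs" "length es = k" by blast
  have ne': "es \<noteq> []" using k(2) p0 p(2) by force
  have mx: "length es' \<le> length es" if "spath S s t es' vs'" for es' vs' using k(2) p(2) that by blast
  have l1: "is_leaf S s t (last vs) (last es)" by (rule maxpath_leaf[OF p(1) ne' mx ac])
  have pr: "spath S s t (rev es) (rev vs)" by (rule spath_rev[OF p(1)])
  have l2: "is_leaf S s t (last (rev vs)) (last (rev es))"
    by (rule maxpath_leaf[OF pr]) (use ne' mx ac in auto)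
  have len: "length vs = Suc (length es)" "distinct vs" using p unfolding spath_def by auto
  have "last vs \<noteq> last (rev vs)"
  proof -
    have vne: "vs \<noteq> []" using len by auto
    have "last vs = vs ! length es" "last (rev vs) = vs ! 0"
      using len vne by (auto simp: last_conv_nth last_rev hd_conv_nth)
    then show ?thesis using len ne' by (simp add: nth_eq_iff_index_eq)
  qed
  then show ?thesis using l1 l2 by blast
qed


lemma sum_single_supp:
  fixes f :: "'e \<Rightarrow> int"
  assumes "finite A" "\<And>e. e \<in> A \<Longrightarrow> e \<noteq> ee \<Longrightarrow> f e = 0"
  shows "(\<Sum>e\<in>A. f e) = (if ee \<in> A then f ee else 0)"
proof -
  have "(\<Sum>e\<in>A. f e) = (\<Sum>e\<in>A. if e = ee then f ee else 0)"
    by (rule sum.cong) (use assms(2) in auto)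
  also have "\<dots> = (if ee \<in> A then f ee else 0)" using assms(1) by (simp add: sum.delta')
  finally show ?thesis .
qed

lemma leaf_bd:
  assumes fE: "finite E" and lf: "is_leaf {e\<in>E. c e \<noteq> c' e} s t z e0"
  shows "bd E s t c' z - bd E s t c z = (if t e0 = z then c' e0 - c e0 else 0) - (if s e0 = z then c' e0 - c e0 else 0)"
proof -
  have L: "e0 \<in> {e\<in>E. c e \<noteq> c' e}" "\<forall>e\<in>{e\<in>E. c e \<noteq> c' e}. (s e = z \<or> t e = z) \<longrightarrow> e = e0"
    using lf unfolding is_leaf_def by blast+
  have e0E: "e0 \<in> E" using L(1) by blast
  have uniq: "c' e - c e = 0" if "e \<in> E" "s e = z \<or> t e = z" "e \<noteq> e0" for e
  proof -
    have "e \<notin> {e\<in>E. c e \<noteq> c' e}" using L(2) that by blast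
    then show ?thesis using that(1) by simp
  qed
  have "bd E s t c' z - bd E s t c z = (\<Sum>e\<in>{e\<in>E. t e = z}. c' e - c e) - (\<Sum>e\<in>{e\<in>E. s e = z}. c' e - c e)"
    unfolding bd_def by (simp add: sum_subtractf)
  also have "(\<Sum>e\<in>{e\<in>E. t e = z}. c' e - c e) = (if t e0 = z then c' e0 - c e0 else 0)"
    by (subst sum_single_supp[where ee=e0]) (use fE uniq e0E in auto)
  also have "(\<Sum>e\<in>{e\<in>E. s e = z}. c' e - c e) = (if s e0 = z then c' e0 - c e0 else 0)"
    by (subst sum_single_supp[where ee=e0]) (use fE uniq e0E in auto)
  finally show ?thesis .
qed

lemma mod_nz:
  fixes d :: int
  assumes "d \<noteq> 0" "\<bar>d\<bar> < int m"
  shows "d mod int m \<noteq> 0"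
proof
  assume "d mod int m = 0"
  then have "int m dvd d" by (simp add: dvd_eq_mod_eq_0)
  then have "\<bar>int m\<bar> \<le> \<bar>d\<bar>" using assms(1) dvd_imp_le_int by blast
  then show False using assms(2) by simp
qed

lemma hc_bd_diff:
  assumes x: "(v, c) \<in> hc_verts m V E s t" and y: "(w, c') \<in> hc_verts m V E s t" and z: "z \<in> V"
  shows "(bd E s t c' z - bd E s t c z) mod int m = ((if z = w then 1 else 0) - (if z = v then 1 else 0)) mod int m"
proof -
  have a: "bd E s t c' z mod int m = ((if z = w then 1 else 0) - (if z = hc_base V then 1 else 0)) mod int m"
    using y z unfolding hc_verts_iff by auto
  have b: "bd E s t c z mod int m = ((if z = v then 1 else 0) - (if z = hc_base V then 1 else 0)) mod int m"
    using x z unfolding hc_verts_iff by auto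
  have "(bd E s t c' z - bd E s t c z) mod int m =
     (((if z = w then 1 else 0) - (if z = hc_base V then 1 else 0)) - ((if z = v then 1 else 0) - (if z = hc_base V then 1 else 0))) mod int m"
    using mod_diff_cong[OF a b] .
  then show ?thesis by simp
qed

lemma reach_acyclic:
  assumes m: "m \<ge> 2" and wf: "mg_wf V E s t"
  shows "(v, c) \<in> hc_verts m V E s t \<Longrightarrow> (w, c') \<in> hc_verts m V E s t \<Longrightarrow>
     \<not> (\<exists>es vs. mg_cycle {e\<in>E. c e \<noteq> c' e} s t es vs) \<Longrightarrow> card {e\<in>E. c e \<noteq> c' e} = k \<Longrightarrow>
     (hc_adj m V E s t ^^ k) (v, c) (w, c')"
proof (induction k arbitrary: v c)
  have fE: "finite E" using wf unfolding mg_wf_def by auto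
  case 0
  then have "{e\<in>E. c e \<noteq> c' e} = {}" using fE by simp
  then have cc: "c = c'" using 0(1,2) unfolding hc_verts_iff by (auto intro!: ext) (metis)
  have wV: "w \<in> V" using 0(2) unfolding hc_verts_iff by auto
  have "v = w"
  proof (rule ccontr)
    assume vw: "v \<noteq> w"
    have "(bd E s t c' w - bd E s t c w) mod int m = ((if w = w then 1 else 0) - (if w = v then 1 else 0)) mod int m"
      by (rule hc_bd_diff[OF 0(1,2) wV])
    then have "1 mod int m = 0" using cc vw by simp
    then show False using m by simp
  qed
  then show ?case using cc by simp
next
  have fE: "finite E" using wf unfolding mg_wf_def by auto
  have m0: "m > 0" using m by simp
  case (Suc k)
  let ?S = "{e\<in>E. c e \<noteq> c' e}"
  have finS: "finite ?S" using fE by simp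
  have neS: "?S \<noteq> {}" using Suc.prems(4) by (metis card.empty nat.distinct(1))
  have x: "(v, c) \<in> hc_verts m V E s t" and y: "(w, c') \<in> hc_verts m V E s t" using Suc.prems by auto
  have rng: "\<And>e. c e \<in> {0..<int m}" "\<And>e. c' e \<in> {0..<int m}" using x y unfolding hc_verts_iff by auto
  have leafinfo: "(z = v \<or> z = w) \<and> v \<noteq> w" if lf: "is_leaf ?S s t z e0" for z e0
  proof -
    have e0: "e0 \<in> E" "c e0 \<noteq> c' e0" "s e0 \<noteq> t e0" "s e0 = z \<or> t e0 = z" using lf unfolding is_leaf_def by auto
    have zV: "z \<in> V" using e0 wf unfolding mg_wf_def by auto
    have d: "c' e0 - c e0 \<noteq> 0" "\<bar>c' e0 - c e0\<bar> < int m" using e0(2) rng[of e0] by auto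
    have nz1: "(c' e0 - c e0) mod int m \<noteq> 0" by (rule mod_nz[OF d])
    have nz2: "(- (c' e0 - c e0)) mod int m \<noteq> 0" by (rule mod_nz) (use d in auto)
    have "(bd E s t c' z - bd E s t c z) mod int m \<noteq> 0"
      using leaf_bd[OF fE lf] e0(3,4) nz1 nz2 by auto
    then have "((if z = w then 1 else 0) - (if z = v then 1 else 0)) mod int m \<noteq> 0"
      using hc_bd_diff[OF x y zV] by simp
    then show ?thesis by (auto split: if_splits)
  qed
  obtain z1 z2 e1 e2 where zz: "z1 \<noteq> z2" "is_leaf ?S s t z1 e1" "is_leaf ?S s t z2 e2"
    using two_leaves[OF finS neS Suc.prems(3)] by blast
  have vw: "v \<noteq> w" using leafinfo[OF zz(2)] by auto
  obtain e0 where lf: "is_leaf ?S s t v e0"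
    using zz leafinfo[OF zz(2)] leafinfo[OF zz(3)] by metis
  have e0: "e0 \<in> E" "c e0 \<noteq> c' e0" "s e0 \<noteq> t e0" "s e0 = v \<or> t e0 = v" using lf unfolding is_leaf_def by auto
  have vV: "v \<in> V" using x unfolding hc_verts_iff by auto
  have bdv: "(bd E s t c' v - bd E s t c v) mod int m = (- 1) mod int m"
    using hc_bd_diff[OF x y vV] vw by simp
  let ?c1 = "c(e0 := c' e0)"
  have S1: "{e\<in>E. ?c1 e \<noteq> c' e} = ?S - {e0}" by auto
  have cardS1: "card {e\<in>E. ?c1 e \<noteq> c' e} = k" unfolding S1 using Suc.prems(4) e0 finS by simp
  have ac1: "\<not> (\<exists>es vs. mg_cycle {e\<in>E. ?c1 e \<noteq> c' e} s t es vs)"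
    using Suc.prems(3) cycle_mono[of "{e\<in>E. ?c1 e \<noteq> c' e}" s t _ _ ?S] unfolding S1 by blast
  show ?case
  proof (cases "s e0 = v")
    case True
    then have "t e0 \<noteq> v" using e0 by auto
    then have "(- (c' e0 - c e0)) mod int m = (- 1) mod int m" using bdv leaf_bd[OF fE lf] True by simp
    then have "(c' e0 - c e0) mod int m = 1 mod int m" by (metis minus_minus mod_minus_cong)
    then have "(c e0 + (c' e0 - c e0)) mod int m = (c e0 + 1) mod int m" by (metis mod_add_cong)
    then have ce: "c' e0 = (c e0 + 1) mod int m" using rng[of e0] by simp
    have x1: "(t e0, ?c1) \<in> hc_verts m V E s t" using hc_step_fwd[OF x wf e0(1) m0 True] ce by simp
    have adj: "hc_adj m V E s t (v, c) (t e0, ?c1)"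
      unfolding hc_adj_def using x x1 e0(1) True ce by auto
    have "(hc_adj m V E s t ^^ k) (t e0, ?c1) (w, c')" by (rule Suc.IH[OF x1 y ac1 cardS1])
    then show ?thesis by (rule relpowp_Suc_I2[where P="hc_adj m V E s t", OF adj])
  next
    case False
    then have tv: "t e0 = v" using e0 by auto
    then have "(c' e0 - c e0) mod int m = (- 1) mod int m" using bdv leaf_bd[OF fE lf] False by simp
    then have "(c e0 + (c' e0 - c e0)) mod int m = (c e0 + - 1) mod int m" by (metis mod_add_cong)
    then have ce: "c' e0 = (c e0 - 1) mod int m" using rng[of e0] by simp
    have x1: "(s e0, ?c1) \<in> hc_verts m V E s t" using hc_step_bwd[OF x wf e0(1) m0 tv] ce by simp
    have "(c' e0 + 1) mod int m = (c e0 - 1 + 1) mod int m" unfolding ce by (simp add: mod_add_left_eq)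
    then have ce2: "(c' e0 + 1) mod int m = c e0" using rng[of e0] by simp
    have cc: "c = ?c1(e0 := (?c1 e0 + 1) mod int m)" using ce2 by (auto intro!: ext)
    have adj: "hc_adj m V E s t (v, c) (s e0, ?c1)"
      unfolding hc_adj_def using x x1 e0(1) tv cc by auto
    have "(hc_adj m V E s t ^^ k) (s e0, ?c1) (w, c')" by (rule Suc.IH[OF x1 y ac1 cardS1])
    then show ?thesis by (rule relpowp_Suc_I2[where P="hc_adj m V E s t", OF adj])
  qed
qed


lemma lift_path:
  assumes wf: "mg_wf V E s t" and m0: "m > 0" and FE: "F \<subseteq> E"
  shows "(mg_adj F s t)\<^sup>*\<^sup>* u u' \<Longrightarrow> (u, c) \<in> hc_verts m V E s t \<Longrightarrow>
    \<exists>c''. (u', c'') \<in> hc_verts m V E s t \<and> (hc_adj m V E s t)\<^sup>*\<^sup>* (u, c) (u', c'') \<and> (\<forall>e. e \<notin> F \<longrightarrow> c'' e = c e)"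
proof (induction rule: rtranclp_induct)
  case base
  then show ?case by blast
next
  case (step a a')
  then obtain c1 where c1: "(a, c1) \<in> hc_verts m V E s t" "(hc_adj m V E s t)\<^sup>*\<^sup>* (u, c) (a, c1)" "\<forall>e. e \<notin> F \<longrightarrow> c1 e = c e"
    by blast
  have rng: "\<And>e. c1 e \<in> {0..<int m}" using c1(1) unfolding hc_verts_iff by auto
  obtain e where e: "e \<in> F" "(s e = a \<and> t e = a') \<or> (s e = a' \<and> t e = a)"
    using step(2) unfolding mg_adj_def by blast
  have eE: "e \<in> E" using e FE by auto
  show ?case
  proof (cases "s e = a \<and> t e = a'")
    case True
    let ?c2 = "c1(e := (c1 e + 1) mod int m)"
    have x2: "(a', ?c2) \<in> hc_verts m V E s t" using hc_step_fwd[OF c1(1) wf eE m0] True by auto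
    have "hc_adj m V E s t (a, c1) (a', ?c2)" unfolding hc_adj_def using c1(1) x2 eE True by auto
    then have "(hc_adj m V E s t)\<^sup>*\<^sup>* (u, c) (a', ?c2)" using c1(2) by (rule rtranclp.rtrancl_into_rtrancl[rotated])
    moreover have "\<forall>e'. e' \<notin> F \<longrightarrow> ?c2 e' = c e'" using c1(3) e(1) by auto
    ultimately show ?thesis using x2 by blast
  next
    case False
    then have F2: "s e = a'" "t e = a" using e by auto
    let ?c2 = "c1(e := (c1 e - 1) mod int m)"
    have x2: "(a', ?c2) \<in> hc_verts m V E s t" using hc_step_bwd[OF c1(1) wf eE m0] F2 by auto
    have "((c1 e - 1) mod int m + 1) mod int m = (c1 e - 1 + 1) mod int m" by (simp add: mod_add_left_eq)
    then have q: "((c1 e - 1) mod int m + 1) mod int m = c1 e" using rng[of e] by simp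
    have cc: "c1 = ?c2(e := (?c2 e + 1) mod int m)" using q by (auto intro!: ext)
    have "hc_adj m V E s t (a, c1) (a', ?c2)" unfolding hc_adj_def using c1(1) x2 eE F2 cc by auto
    then have "(hc_adj m V E s t)\<^sup>*\<^sup>* (u, c) (a', ?c2)" using c1(2) by (rule rtranclp.rtrancl_into_rtrancl[rotated])
    moreover have "\<forall>e'. e' \<notin> F \<longrightarrow> ?c2 e' = c e'" using c1(3) e(1) by auto
    ultimately show ?thesis using x2 by blast
  qed
qed

definition mu :: "nat \<Rightarrow> 'e set \<Rightarrow> ('e \<Rightarrow> int) \<Rightarrow> ('e \<Rightarrow> int) \<Rightarrow> nat" where
  "mu m A c c' = (\<Sum>e\<in>A. nat ((c' e - c e) mod int m))"

lemma hc_connected_aux: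
  assumes m: "m \<ge> 2" and wf: "mg_wf V E s t" and T: "mg_spanning_tree V E s t T"
  shows "\<forall>v c. mu m (E - T) c c' = n \<longrightarrow> (v, c) \<in> hc_verts m V E s t \<longrightarrow> (w, c') \<in> hc_verts m V E s t \<longrightarrow>
     (hc_adj m V E s t)\<^sup>*\<^sup>* (v, c) (w, c')"
proof (induction n rule: less_induct)
  case (less n)
  have fE: "finite E" using wf unfolding mg_wf_def by auto
  have m0: "m > 0" using m by simp
  have TE: "T \<subseteq> E" and Tc: "mg_connected V T s t" and Tac: "\<not> (\<exists>es vs. mg_cycle T s t es vs)"
    using T unfolding mg_spanning_tree_def by auto
  show ?case
  proof (intro allI impI)
    fix v c assume mu: "mu m (E - T) c c' = n" and x: "(v, c) \<in> hc_verts m V E s t" and y: "(w, c') \<in> hc_verts m V E s t"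
    have rng: "\<And>e. c e \<in> {0..<int m}" "\<And>e. c' e \<in> {0..<int m}" using x y unfolding hc_verts_iff by auto
    show "(hc_adj m V E s t)\<^sup>*\<^sup>* (v, c) (w, c')"
    proof (cases "\<forall>e\<in>E - T. c e = c' e")
      case True
      then have sub: "{e\<in>E. c e \<noteq> c' e} \<subseteq> T" by auto
      have ac: "\<not> (\<exists>es vs. mg_cycle {e\<in>E. c e \<noteq> c' e} s t es vs)"
        using Tac cycle_mono[OF _ sub] by blast
      show ?thesis using reach_acyclic[OF m wf x y ac refl] by (rule relpowp_imp_rtranclp)
    next
      case False
      then obtain e0 where e0: "e0 \<in> E" "e0 \<notin> T" "c e0 \<noteq> c' e0" by auto
      have vV: "v \<in> V" using x unfolding hc_verts_iff by auto
      have pV: "s e0 \<in> V" using wf e0 unfolding mg_wf_def by auto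
      have "(mg_adj T s t)\<^sup>*\<^sup>* v (s e0)" using Tc vV pV unfolding mg_connected_def by auto
      from lift_path[OF wf m0 TE this x] obtain c1 where
        c1: "(s e0, c1) \<in> hc_verts m V E s t" "(hc_adj m V E s t)\<^sup>*\<^sup>* (v, c) (s e0, c1)" "\<forall>e. e \<notin> T \<longrightarrow> c1 e = c e"
        by blast
      let ?c2 = "c1(e0 := (c1 e0 + 1) mod int m)"
      have x2: "(t e0, ?c2) \<in> hc_verts m V E s t" using hc_step_fwd[OF c1(1) wf e0(1) m0 refl] .
      have adj: "hc_adj m V E s t (s e0, c1) (t e0, ?c2)" unfolding hc_adj_def using c1(1) x2 e0(1) by auto
      have c10: "c1 e0 = c e0" using c1(3) e0(2) by auto
      have d: "c' e0 - c e0 \<noteq> 0" "\<bar>c' e0 - c e0\<bar> < int m" using e0(3) rng[of e0] by auto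
      have nz: "(c' e0 - c e0) mod int m \<noteq> 0" by (rule mod_nz[OF d])
      define r where "r = (c' e0 - c e0) mod int m"
      have r0: "0 \<le> r" "r < int m" unfolding r_def using m0 by simp_all
      have r: "1 \<le> r" "r < int m" using r0 nz unfolding r_def by simp_all
      have "(c' e0 - ?c2 e0) mod int m = (c' e0 - (c e0 + 1)) mod int m" by (simp add: c10 mod_diff_right_eq)
      also have "\<dots> = (r - 1) mod int m" unfolding r_def by (simp add: mod_diff_left_eq algebra_simps)
      also have "\<dots> = r - 1" using r by simp
      finally have e0m: "nat ((c' e0 - ?c2 e0) mod int m) = nat ((c' e0 - c e0) mod int m) - 1" unfolding r_def by simp
      have fin: "finite (E - T)" using fE by simp
      have e0in: "e0 \<in> E - T" using e0 by simp
      have rest: "(\<Sum>e\<in>E - T - {e0}. nat ((c' e - ?c2 e) mod int m)) = (\<Sum>e\<in>E - T - {e0}. nat ((c' e - c e) mod int m))"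
        by (rule sum.cong) (use c1(3) in auto)
      have A1: "mu m (E - T) ?c2 c' = nat ((c' e0 - ?c2 e0) mod int m) + (\<Sum>e\<in>E - T - {e0}. nat ((c' e - ?c2 e) mod int m))"
        unfolding mu_def by (rule sum.remove[OF fin e0in])
      have A2: "mu m (E - T) c c' = nat ((c' e0 - c e0) mod int m) + (\<Sum>e\<in>E - T - {e0}. nat ((c' e - c e) mod int m))"
        unfolding mu_def by (rule sum.remove[OF fin e0in])
      have "nat ((c' e0 - c e0) mod int m) \<ge> 1" using r unfolding r_def by simp
      then have mu2: "mu m (E - T) ?c2 c' < n" using A1 A2 rest e0m mu by linarith
      have r1: "(hc_adj m V E s t)\<^sup>*\<^sup>* (v, c) (t e0, ?c2)" using c1(2) adj by (rule rtranclp.rtrancl_into_rtrancl)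
      have r2: "(hc_adj m V E s t)\<^sup>*\<^sup>* (t e0, ?c2) (w, c')" using less.IH mu2 x2 y by blast
      show ?thesis using rtranclp_trans[OF r1 r2] .
    qed
  qed
qed

lemma hc_connected:
  assumes m: "m \<ge> 2" and wf: "mg_wf V E s t" and T: "mg_spanning_tree V E s t T"
    and x: "x \<in> hc_verts m V E s t" and y: "y \<in> hc_verts m V E s t"
  shows "(hc_adj m V E s t)\<^sup>*\<^sup>* x y"
  using hc_connected_aux[OF m wf T, of "snd y" "mu m (E - T) (snd x) (snd y)" "fst y"] x y
  by (cases x, cases y) auto


lemma fold_diff: "{e. fold (apply_letter m) w a e \<noteq> a e} \<subseteq> fst ` set w"
proof (induction w arbitrary: a)
  case Nil then show ?case by simp
next
  case (Cons l w)
  have "fold (apply_letter m) (l # w) a = fold (apply_letter m) w (apply_letter m l a)" by simp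
  moreover have "{e. apply_letter m l a e \<noteq> a e} \<subseteq> {fst l}" unfolding apply_letter_def by auto
  ultimately show ?case using Cons.IH[of "apply_letter m l a"] by force
qed

lemma word_len_ge:
  assumes "fold (apply_letter m) w a = b"
  shows "card {e\<in>I. a e \<noteq> b e} \<le> length w"
proof -
  have "{e\<in>I. a e \<noteq> b e} \<subseteq> fst ` set w" using fold_diff[of m w a] assms by auto
  then have "card {e\<in>I. a e \<noteq> b e} \<le> card (fst ` set w)" by (intro card_mono) auto
  also have "\<dots> \<le> card (set w)" by (rule card_image_le) simp
  also have "\<dots> \<le> length w" by (rule card_length)
  finally show ?thesis .
qed

lemma fold_rep:
  assumes m0: "m > 0"
  shows "a e \<in> {0..<int m} \<Longrightarrow> fold (apply_letter m) (replicate k (e, True)) a = a(e := (a e + int k) mod int m)"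
proof (induction k arbitrary: a)
  case 0 then show ?case by (auto intro!: ext)
next
  case (Suc k)
  let ?a = "apply_letter m (e, True) a"
  have a1: "?a = a(e := (a e + 1) mod int m)" unfolding apply_letter_def by simp
  have r: "?a e \<in> {0..<int m}" unfolding a1 using m0 by simp
  have "fold (apply_letter m) (replicate (Suc k) (e, True)) a = fold (apply_letter m) (replicate k (e, True)) ?a" by simp
  also have "\<dots> = ?a(e := (?a e + int k) mod int m)" using Suc.IH[of ?a] r by blast
  also have "\<dots> = a(e := (a e + int (Suc k)) mod int m)"
  proof -
    have "(?a e + int k) mod int m = (a e + 1 + int k) mod int m" unfolding a1 by (simp add: mod_add_left_eq)
    then show ?thesis unfolding a1 by (simp add: add.assoc)
  qed
  finally show ?case .
qed

lemma word_exists: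
  assumes m0: "m > 0"
  shows "finite I \<Longrightarrow> (\<forall>e. e \<notin> I \<longrightarrow> a e = b e) \<Longrightarrow> (\<forall>e\<in>I. a e \<in> {0..<int m} \<and> b e \<in> {0..<int m}) \<Longrightarrow>
    \<exists>w. (\<forall>l\<in>set w. fst l \<in> I) \<and> fold (apply_letter m) w a = b"
proof (induction I arbitrary: a rule: finite_induct)
  case empty
  then have "a = b" by auto
  then show ?case by (intro exI[of _ "[]"]) simp
next
  case (insert e I)
  define k where "k = nat ((b e - a e) mod int m)"
  have ik: "int k = (b e - a e) mod int m" unfolding k_def using m0 by simp
  have rng: "a e \<in> {0..<int m}" "b e \<in> {0..<int m}" using insert.prems by auto
  have "(a e + int k) mod int m = (a e + (b e - a e)) mod int m" unfolding ik by (simp add: mod_add_right_eq)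
  then have bk: "(a e + int k) mod int m = b e" using rng by simp
  let ?a1 = "a(e := b e)"
  have f0: "fold (apply_letter m) (replicate k (e, True)) a = ?a1" using fold_rep[OF m0, of a e k] rng(1) bk by simp
  have p1: "\<forall>e'. e' \<notin> I \<longrightarrow> ?a1 e' = b e'" using insert.prems(1) by auto
  have p2: "\<forall>e'\<in>I. ?a1 e' \<in> {0..<int m} \<and> b e' \<in> {0..<int m}" using insert.prems(2) insert.hyps(2) by auto
  have "\<exists>w. (\<forall>l\<in>set w. fst l \<in> I) \<and> fold (apply_letter m) w ?a1 = b"
    by (rule insert.IH[OF p1 p2])
  then obtain w1 where w1: "\<forall>l\<in>set w1. fst l \<in> I" "fold (apply_letter m) w1 ?a1 = b" by blast
  show ?case
    by (intro exI[of _ "replicate k (e, True) @ w1"]) (use w1 f0 in auto)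
qed

lemma word_dist_lower:
  assumes m0: "m > 0" and fin: "finite I" and agree: "\<forall>e. e \<notin> I \<longrightarrow> a e = b e"
    and rng: "\<forall>e\<in>I. a e \<in> {0..<int m} \<and> b e \<in> {0..<int m}"
  shows "card {e\<in>I. a e \<noteq> b e} \<le> word_dist m I a b"
proof -
  obtain w where w: "\<forall>l\<in>set w. fst l \<in> I" "fold (apply_letter m) w a = b"
    using word_exists[OF m0 fin agree rng] by blast
  show ?thesis unfolding word_dist_def
  proof (rule LeastI2_ex)
    show "\<exists>k w. length w = k \<and> (\<forall>l\<in>set w. fst l \<in> I) \<and> fold (apply_letter m) w a = b" using w by blast
  next
    fix k assume "\<exists>w. length w = k \<and> (\<forall>l\<in>set w. fst l \<in> I) \<and> fold (apply_letter m) w a = b"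
    then obtain w' where "length w' = k" "fold (apply_letter m) w' a = b" by blast
    then show "card {e\<in>I. a e \<noteq> b e} \<le> k" using word_len_ge by blast
  qed
qed

lemma word_dist_upper:
  assumes "\<forall>l\<in>set w. fst l \<in> I" "fold (apply_letter m) w a = b"
  shows "word_dist m I a b \<le> length w"
  unfolding word_dist_def by (rule Least_le) (use assms in blast)

lemma finite_trees:
  assumes "finite E"
  shows "finite {T. mg_spanning_tree V E s t T}"
  by (rule finite_subset[of _ "Pow E"]) (use assms in \<open>auto simp: mg_spanning_tree_def\<close>)

lemma sum_ind_card:
  assumes "finite A"
  shows "(\<Sum>x\<in>A. if P x then 1 else 0 :: real) = real (card {x\<in>A. P x})"
proof -
  have "(\<Sum>x\<in>A. if P x then 1 else 0 :: real) = (\<Sum>x\<in>{x\<in>A. P x}. 1)"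
    using sum.inter_filter[OF assms, of "\<lambda>_. 1::real" P] by simp
  then show ?thesis by simp
qed

lemma dT_adj:
  assumes m0: "m > 0" and eE: "e \<in> E" and y: "snd y = (snd x)(e := (snd x e + 1) mod int m)"
  shows "real (dT m E T x y) \<le> (if e \<notin> T then 1 else 0)"
proof (cases "e \<in> T")
  case True
  have cy: "cloud E T y = cloud E T x" unfolding cloud_def using y True by (auto intro!: ext)
  have "dT m E T x y \<le> 0"
    using word_dist_upper[of "[]" "E - T" m "cloud E T x" "cloud E T y"] cy unfolding dT_def by simp
  then show ?thesis by simp
next
  case False
  have cy: "cloud E T y = fold (apply_letter m) [(e, True)] (cloud E T x)"
    unfolding cloud_def apply_letter_def using y False eE by (auto intro!: ext)
  have "dT m E T x y \<le> length [(e, True)]" unfolding dT_def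
    by (rule word_dist_upper) (use False eE cy in auto)
  then show ?thesis using False by simp
qed

lemma dQ_adj1:
  assumes m0: "m > 0" and fE: "finite E" and eE: "e \<in> E" and y: "snd y = (snd x)(e := (snd x e + 1) mod int m)"
    and Nt: "card {T. mg_spanning_tree V E s t T \<and> e \<notin> T} = N"
  shows "dQ m N V E s t x y \<le> 1"
proof -
  let ?TS = "{T. mg_spanning_tree V E s t T}"
  have fT: "finite ?TS" by (rule finite_trees[OF fE])
  have "(\<Sum>T\<in>?TS. real (dT m E T x y)) \<le> (\<Sum>T\<in>?TS. if e \<notin> T then 1 else 0)"
    by (rule sum_mono) (rule dT_adj[OF m0 eE y])
  also have "\<dots> = real (card {T\<in>?TS. e \<notin> T})" by (rule sum_ind_card[OF fT])
  also have "{T\<in>?TS. e \<notin> T} = {T. mg_spanning_tree V E s t T \<and> e \<notin> T}" by auto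
  finally have le: "(\<Sum>T\<in>?TS. real (dT m E T x y)) \<le> real N" using Nt by simp
  show ?thesis
  proof (cases "N = 0")
    case True then show ?thesis unfolding dQ_def by simp
  next
    case False
    then have "(1 / real N) * (\<Sum>T\<in>?TS. real (dT m E T x y)) \<le> (1 / real N) * real N"
      using le by (intro mult_left_mono) auto
    then show ?thesis using False unfolding dQ_def by simp
  qed
qed

lemma dQ_adj:
  assumes m0: "m > 0" and fE: "finite E" and adj: "hc_adj m V E s t x y"
    and Nt: "\<And>e. e \<in> E \<Longrightarrow> card {T. mg_spanning_tree V E s t T \<and> e \<notin> T} = N"
  shows "dQ m N V E s t x y \<le> 1 \<or> dQ m N V E s t y x \<le> 1"
proof -
  obtain e where e: "e \<in> E" "(snd y = (snd x)(e := (snd x e + 1) mod int m)) \<or> (snd x = (snd y)(e := (snd y e + 1) mod int m))"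
    using adj unfolding hc_adj_def by blast
  then show ?thesis using dQ_adj1[OF m0 fE e(1) _ Nt[OF e(1)]] by blast
qed

lemma dQ_lower:
  assumes m0: "m > 0" and fE: "finite E" and Npos: "N > 0"
    and Nt: "\<And>e. e \<in> E \<Longrightarrow> card {T. mg_spanning_tree V E s t T \<and> e \<notin> T} = N"
    and x: "x \<in> hc_verts m V E s t" and y: "y \<in> hc_verts m V E s t"
  shows "real (card {e\<in>E. snd x e \<noteq> snd y e}) \<le> dQ m N V E s t x y"
proof -
  let ?TS = "{T. mg_spanning_tree V E s t T}"
  let ?S = "{e\<in>E. snd x e \<noteq> snd y e}"
  have fT: "finite ?TS" by (rule finite_trees[OF fE])
  have fS: "finite ?S" using fE by simp
  have rx: "\<And>e. snd x e \<in> {0..<int m}" using x by (cases x) (auto simp: hc_verts_iff)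
  have ry: "\<And>e. snd y e \<in> {0..<int m}" using y by (cases y) (auto simp: hc_verts_iff)
  have each: "(\<Sum>e\<in>?S. if e \<notin> T then 1 else 0 :: real) \<le> real (dT m E T x y)" for T
  proof -
    have "(\<Sum>e\<in>?S. if e \<notin> T then 1 else 0 :: real) = real (card {e\<in>?S. e \<notin> T})" by (rule sum_ind_card[OF fS])
    also have "{e\<in>?S. e \<notin> T} = {e\<in>E - T. cloud E T x e \<noteq> cloud E T y e}" unfolding cloud_def by auto
    also have "card \<dots> \<le> dT m E T x y" unfolding dT_def
      by (rule word_dist_lower[OF m0]) (use fE rx ry in \<open>auto simp: cloud_def\<close>)
    finally show ?thesis by simp
  qed
  have "real (card ?S) * real N = (\<Sum>e\<in>?S. real N)" by simp
  also have "\<dots> = (\<Sum>e\<in>?S. \<Sum>T\<in>?TS. if e \<notin> T then 1 else 0 :: real)"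
  proof (rule sum.cong[OF refl])
    fix e assume "e \<in> ?S"
    then have eE: "e \<in> E" by simp
    have "(\<Sum>T\<in>?TS. if e \<notin> T then 1 else 0 :: real) = real (card {T\<in>?TS. e \<notin> T})" by (rule sum_ind_card[OF fT])
    also have "{T\<in>?TS. e \<notin> T} = {T. mg_spanning_tree V E s t T \<and> e \<notin> T}" by auto
    finally show "real N = (\<Sum>T\<in>?TS. if e \<notin> T then 1 else 0 :: real)" using Nt[OF eE] by simp
  qed
  also have "\<dots> = (\<Sum>T\<in>?TS. \<Sum>e\<in>?S. if e \<notin> T then 1 else 0 :: real)" by (rule sum.swap)
  also have "\<dots> \<le> (\<Sum>T\<in>?TS. real (dT m E T x y))" by (rule sum_mono) (rule each)
  finally have le: "real (card ?S) * real N \<le> (\<Sum>T\<in>?TS. real (dT m E T x y))" .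
  have "real (card ?S) = (1 / real N) * (real (card ?S) * real N)" using Npos by simp
  also have "\<dots> \<le> (1 / real N) * (\<Sum>T\<in>?TS. real (dT m E T x y))" using le by (intro mult_left_mono) auto
  finally show ?thesis unfolding dQ_def .
qed

lemma finite_hc_verts:
  assumes wf: "mg_wf V E s t"
  shows "finite (hc_verts m V E s t)"
proof -
  have fV: "finite V" and fE: "finite E" using wf unfolding mg_wf_def by auto
  have "finite {c. \<forall>e. (e \<in> E \<longrightarrow> c e \<in> {0..<int m}) \<and> (e \<notin> E \<longrightarrow> c e = 0)}"
    by (rule finite_set_of_finite_funs[OF fE]) simp
  then have "finite (V \<times> {c. \<forall>e. (e \<in> E \<longrightarrow> c e \<in> {0..<int m}) \<and> (e \<notin> E \<longrightarrow> c e = 0)})"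
    using fV by simp
  moreover have "hc_verts m V E s t \<subseteq> V \<times> {c. \<forall>e. (e \<in> E \<longrightarrow> c e \<in> {0..<int m}) \<and> (e \<notin> E \<longrightarrow> c e = 0)}"
    unfolding hc_verts_def by auto
  ultimately show ?thesis by (rule finite_subset[rotated])
qed


lemma coarse_from_bounds:
  fixes d1 d2 :: "'a \<Rightarrow> 'a \<Rightarrow> real"
  assumes nn1: "\<And>p q. p \<in> U \<Longrightarrow> q \<in> U \<Longrightarrow> 0 \<le> d1 p q"
    and nn2: "\<And>p q. p \<in> U \<Longrightarrow> q \<in> U \<Longrightarrow> 0 \<le> d2 p q"
    and B12: "\<And>R. \<exists>B. \<forall>p\<in>U. \<forall>q\<in>U. d1 p q \<le> R \<longrightarrow> d2 p q \<le> B"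
    and B21: "\<And>R. \<exists>B. \<forall>p\<in>U. \<forall>q\<in>U. d2 p q \<le> R \<longrightarrow> d1 p q \<le> B"
  shows "coarse_embedding U d1 d2 id"
proof -
  obtain f12 where f12: "\<And>R p q. p \<in> U \<Longrightarrow> q \<in> U \<Longrightarrow> d1 p q \<le> R \<Longrightarrow> d2 p q \<le> f12 R"
    using B12 by metis
  obtain f21 where f21: "\<And>R p q. p \<in> U \<Longrightarrow> q \<in> U \<Longrightarrow> d2 p q \<le> R \<Longrightarrow> d1 p q \<le> f21 R"
    using B21 by metis
  define C where "C k = (\<Sum>i\<le>k. \<bar>f12 (real i)\<bar>)" for k :: nat
  define D where "D k = real k + (\<Sum>i\<le>k. \<bar>f21 (real i)\<bar>)" for k :: nat
  have Cmono: "C k \<le> C k'" if "k \<le> k'" for k k'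
    unfolding C_def by (rule sum_mono2) (use that in auto)
  have Cge: "\<bar>f12 (real k)\<bar> \<le> C k" for k
    unfolding C_def by (rule member_le_sum) auto
  have Dmono: "D k \<le> D k'" if "k \<le> k'" for k k'
  proof -
    have "(\<Sum>i\<le>k. \<bar>f21 (real i)\<bar>) \<le> (\<Sum>i\<le>k'. \<bar>f21 (real i)\<bar>)" by (rule sum_mono2) (use that in auto)
    then show ?thesis unfolding D_def using that by simp
  qed
  have Dge: "\<bar>f21 (real k)\<bar> \<le> D k" "real k \<le> D k" for k
  proof -
    have "\<bar>f21 (real k)\<bar> \<le> (\<Sum>i\<le>k. \<bar>f21 (real i)\<bar>)" by (rule member_le_sum) auto
    then show "\<bar>f21 (real k)\<bar> \<le> D k" unfolding D_def by simp
    have "0 \<le> (\<Sum>i\<le>k. \<bar>f21 (real i)\<bar>)" by (rule sum_nonneg) auto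
    then show "real k \<le> D k" unfolding D_def by simp
  qed
  define rp where "rp r = r + C (nat \<lceil>r\<rceil>)" for r :: real
  define rm where "rm r = real (card {k. D k < r}) - 1" for r :: real
  have finA: "finite {k. D k < r}" for r
  proof (rule finite_subset)
    show "{k. D k < r} \<subseteq> {..nat \<lceil>r\<rceil>}"
    proof
      fix k assume "k \<in> {k. D k < r}"
      then have "real k < r" using Dge(2)[of k] by simp
      then have "real k \<le> real (nat \<lceil>r\<rceil>)" by linarith
      then show "k \<in> {..nat \<lceil>r\<rceil>}" by simp
    qed
  qed simp
  have "mono rp" unfolding mono_def rp_def
  proof (intro allI impI)
    fix r r' :: real assume "r \<le> r'"
    moreover have "C (nat \<lceil>r\<rceil>) \<le> C (nat \<lceil>r'\<rceil>)" by (rule Cmono) (use \<open>r \<le> r'\<close> in \<open>intro nat_mono ceiling_mono\<close>)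
    ultimately show "r + C (nat \<lceil>r\<rceil>) \<le> r' + C (nat \<lceil>r'\<rceil>)" by simp
  qed
  moreover have "mono rm" unfolding mono_def rm_def
  proof (intro allI impI)
    fix r r' :: real assume "r \<le> r'"
    then have "{k. D k < r} \<subseteq> {k. D k < r'}" by auto
    then have "card {k. D k < r} \<le> card {k. D k < r'}" by (rule card_mono[OF finA])
    then show "real (card {k. D k < r}) - 1 \<le> real (card {k. D k < r'}) - 1" by simp
  qed
  moreover have "filterlim rp at_top at_top"
    unfolding filterlim_at_top eventually_at_top_linorder
  proof
    fix Z :: real
    have "0 \<le> C k" for k unfolding C_def by (rule sum_nonneg) auto
    then have "\<forall>r\<ge>Z. Z \<le> rp r" unfolding rp_def by (metis add_increasing2 order_trans)
    then show "\<exists>N. \<forall>r\<ge>N. Z \<le> rp r" by blast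
  qed
  moreover have "filterlim rm at_top at_top"
    unfolding filterlim_at_top eventually_at_top_linorder
  proof
    fix Z :: real
    let ?K = "nat \<lceil>Z\<rceil>"
    have "\<forall>r\<ge>D ?K + 1. Z \<le> rm r"
    proof (intro allI impI)
      fix r assume r: "D ?K + 1 \<le> r"
      have "{..?K} \<subseteq> {k. D k < r}" using Dmono r by fastforce
      then have "card {..?K} \<le> card {k. D k < r}" by (rule card_mono[OF finA])
      then have "real ?K + 1 \<le> real (card {k. D k < r})" by simp
      then show "Z \<le> rm r" unfolding rm_def by linarith
    qed
    then show "\<exists>N. \<forall>r\<ge>N. Z \<le> rm r" by blast
  qed
  moreover have "rm (d1 p q) \<le> d2 (id p) (id q) \<and> d2 (id p) (id q) \<le> rp (d1 p q)" if p: "p \<in> U" and q: "q \<in> U" for p q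
  proof
    let ?k = "nat \<lceil>d1 p q\<rceil>"
    have "d1 p q \<le> real ?k" by linarith
    then have "d2 p q \<le> f12 (real ?k)" by (rule f12[OF p q])
    also have "\<dots> \<le> C ?k" using Cge[of ?k] by simp
    finally show "d2 (id p) (id q) \<le> rp (d1 p q)" unfolding rp_def using nn1[OF p q] by simp
  next
    let ?A = "{k. D k < d1 p q}"
    show "rm (d1 p q) \<le> d2 (id p) (id q)"
    proof (cases "?A = {}")
      case True then show ?thesis unfolding rm_def using nn2[OF p q] by simp
    next
      case False
      let ?M = "Max ?A"
      have MA: "?M \<in> ?A" using Max_in[OF finA False] .
      have "\<not> d2 p q \<le> real ?M"
      proof
        assume "d2 p q \<le> real ?M"
        then have "d1 p q \<le> f21 (real ?M)" by (rule f21[OF p q])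
        also have "\<dots> \<le> D ?M" using Dge(1)[of ?M] by simp
        finally show False using MA by simp
      qed
      moreover have "card ?A \<le> card {..?M}" by (rule card_mono) (use Max_ge[OF finA] in auto)
      ultimately show ?thesis unfolding rm_def by simp
    qed
  qed
  ultimately show ?thesis unfolding coarse_embedding_def by blast
qed


lemma path_Q:
  assumes sym: "\<forall>x\<in>S. \<forall>y\<in>S. Q x y = Q y x"
    and tri: "\<forall>x\<in>S. \<forall>y\<in>S. \<forall>z\<in>S. Q x z \<le> Q x y + Q y z"
    and r0: "\<forall>x\<in>S. Q x x = 0"
    and adjS: "\<And>x y. A x y \<Longrightarrow> x \<in> S \<and> y \<in> S"
    and adj1: "\<And>x y. A x y \<Longrightarrow> Q x y \<le> 1 \<or> Q y x \<le> 1"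
  shows "(A ^^ k) x z \<Longrightarrow> x \<in> S \<Longrightarrow> z \<in> S \<Longrightarrow> Q x z \<le> real k"
proof (induction k arbitrary: x)
  case 0 then show ?case using r0 by simp
next
  case (Suc k)
  from Suc.prems(1) obtain y where y: "A x y" "(A ^^ k) y z" by (rule relpowp_Suc_E2)
  have yS: "y \<in> S" using adjS[OF y(1)] by simp
  have "Q x y \<le> 1" using adj1[OF y(1)] sym Suc.prems(2) yS by auto
  moreover have "Q y z \<le> real k" by (rule Suc.IH[OF y(2) yS Suc.prems(3)])
  moreover have "Q x z \<le> Q x y + Q y z" using tri Suc.prems(2,3) yS by blast
  ultimately show ?case by simp
qed

lemma tree_exists:
  assumes conn: "mg_connected V E s t" and fE: "finite E" and Npos: "N > 0"
    and Nt: "\<And>e. e \<in> E \<Longrightarrow> card {T. mg_spanning_tree V E s t T \<and> e \<notin> T} = N"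
  shows "\<exists>T. mg_spanning_tree V E s t T"
proof (cases "E = {}")
  case True
  have "mg_spanning_tree V E s t {}" unfolding mg_spanning_tree_def
    using conn True by (auto simp: mg_cycle_def)
  then show ?thesis by blast
next
  case False
  then obtain e where e: "e \<in> E" by auto
  have "card {T. mg_spanning_tree V E s t T \<and> e \<notin> T} > 0" using Nt[OF e] Npos by simp
  then have "{T. mg_spanning_tree V E s t T \<and> e \<notin> T} \<noteq> {}" by (metis card.empty less_irrefl)
  then show ?thesis by blast
qed

lemma comp_K1:
  assumes m: "m \<ge> 2" and wf: "mg_wf V E s t" and conn: "mg_connected V E s t"
    and Nt: "\<And>e. e \<in> E \<Longrightarrow> card {T. mg_spanning_tree V E s t T \<and> e \<notin> T} = N"
    and Qmet: "metric_on (hc_verts m V E s t) (dQ m N V E s t)"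
    and x: "x \<in> hc_verts m V E s t" and y: "y \<in> hc_verts m V E s t"
  shows "dQ m N V E s t x y \<le> graph_dist (hc_adj m V E s t) x y"
proof (cases "N = 0")
  case True
  then show ?thesis unfolding dQ_def graph_dist_def by simp
next
  case False
  have fE: "finite E" using wf unfolding mg_wf_def by auto
  have m0: "m > 0" using m by simp
  obtain T where T: "mg_spanning_tree V E s t T" using tree_exists[OF conn fE _ Nt] False by blast
  have "(hc_adj m V E s t)\<^sup>*\<^sup>* x y" by (rule hc_connected[OF m wf T x y])
  then obtain k where "(hc_adj m V E s t ^^ k) x y" using rtranclp_power by metis
  then have P: "(hc_adj m V E s t ^^ (LEAST k. (hc_adj m V E s t ^^ k) x y)) x y" by (rule LeastI)
  have "dQ m N V E s t x y \<le> real (LEAST k. (hc_adj m V E s t ^^ k) x y)"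
  proof (rule path_Q[OF _ _ _ _ _ P x y])
    show "\<forall>x\<in>hc_verts m V E s t. \<forall>y\<in>hc_verts m V E s t. dQ m N V E s t x y = dQ m N V E s t y x"
      using Qmet unfolding metric_on_def by blast
    show "\<forall>x\<in>hc_verts m V E s t. \<forall>y\<in>hc_verts m V E s t. \<forall>z\<in>hc_verts m V E s t. dQ m N V E s t x z \<le> dQ m N V E s t x y + dQ m N V E s t y z"
      using Qmet unfolding metric_on_def by blast
    show "\<forall>x\<in>hc_verts m V E s t. dQ m N V E s t x x = 0"
      using Qmet unfolding metric_on_def by blast
    show "\<And>x y. hc_adj m V E s t x y \<Longrightarrow> x \<in> hc_verts m V E s t \<and> y \<in> hc_verts m V E s t"
      unfolding hc_adj_def by blast
    show "\<And>x y. hc_adj m V E s t x y \<Longrightarrow> dQ m N V E s t x y \<le> 1 \<or> dQ m N V E s t y x \<le> 1"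
      by (rule dQ_adj[OF m0 fE _ Nt])
  qed
  then show ?thesis unfolding graph_dist_def .
qed

lemma comp_K2:
  assumes m: "m \<ge> 2" and wf: "mg_wf V E s t"
    and Nt: "\<And>e. e \<in> E \<Longrightarrow> card {T. mg_spanning_tree V E s t T \<and> e \<notin> T} = N"
    and Qmet: "metric_on (hc_verts m V E s t) (dQ m N V E s t)"
    and Dmet: "metric_on (hc_verts m V E s t) (graph_dist (hc_adj m V E s t))"
    and gi: "enat L < mg_girth E s t"
    and x: "x \<in> hc_verts m V E s t" and y: "y \<in> hc_verts m V E s t"
    and lt: "dQ m N V E s t x y < real L"
  shows "graph_dist (hc_adj m V E s t) x y \<le> dQ m N V E s t x y"
proof (cases "N = 0")
  case True
  then have "dQ m N V E s t x y = 0" unfolding dQ_def by simp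
  then have "x = y" using Qmet x y unfolding metric_on_def by blast
  moreover have "graph_dist (hc_adj m V E s t) y y = 0" using Dmet y unfolding metric_on_def by blast
  ultimately show ?thesis using True unfolding dQ_def by simp
next
  case False
  have fE: "finite E" using wf unfolding mg_wf_def by auto
  have m0: "m > 0" using m by simp
  obtain v c where xv: "x = (v, c)" by (cases x)
  obtain w c' where yw: "y = (w, c')" by (cases y)
  let ?S = "{e\<in>E. c e \<noteq> c' e}"
  have cS: "real (card ?S) \<le> dQ m N V E s t x y"
    using dQ_lower[OF m0 fE _ Nt x y] False xv yw by simp
  have ac: "\<not> (\<exists>es vs. mg_cycle ?S s t es vs)"
  proof
    assume "\<exists>es vs. mg_cycle ?S s t es vs"
    then obtain es vs where cy: "mg_cycle ?S s t es vs" by blast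
    have cyE: "mg_cycle E s t es vs" by (rule cycle_mono[OF cy]) auto
    have "mg_girth E s t \<le> enat (length es)" unfolding mg_girth_def
      by (rule INF_lower) (use cyE in blast)
    moreover have "length es \<le> card ?S"
    proof -
      have "distinct es" "set es \<subseteq> ?S" using cy unfolding mg_cycle_def by auto
      then have "card (set es) \<le> card ?S" by (intro card_mono) (use fE in auto)
      then show ?thesis using distinct_card[OF \<open>distinct es\<close>] by simp
    qed
    moreover have "card ?S < L" using cS lt by linarith
    ultimately have "mg_girth E s t < enat L" by (meson enat_ord_simps(2) le_less_trans order_le_less_trans)
    then show False using gi by simp
  qed
  have P: "(hc_adj m V E s t ^^ card ?S) x y"
    using reach_acyclic[OF m wf, of v c w c' "card ?S"] x y ac xv yw by simp
  have "graph_dist (hc_adj m V E s t) x y \<le> real (card ?S)"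
    unfolding graph_dist_def by (simp add: Least_le[of "\<lambda>k. (hc_adj m V E s t ^^ k) x y" "card ?S", OF P])
  then show ?thesis using cS by simp
qed


lemma metric_restrict:
  assumes "metric_on (disj_union X) d" "\<forall>x\<in>X n. \<forall>y\<in>X n. d (n, x) (n, y) = dn x y"
  shows "metric_on (X n) dn"
proof -
  have mem: "\<And>x. x \<in> X n \<Longrightarrow> (n, x) \<in> disj_union X" unfolding disj_union_def by simp
  have A: "\<forall>x\<in>disj_union X. \<forall>y\<in>disj_union X. 0 \<le> d x y \<and> d x y = d y x \<and> (d x y = 0 \<longleftrightarrow> x = y)"
    and B: "\<forall>x\<in>disj_union X. \<forall>y\<in>disj_union X. \<forall>z\<in>disj_union X. d x z \<le> d x y + d y z"
    using assms(1) unfolding metric_on_def by blast+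
  have 1: "0 \<le> dn x y \<and> dn x y = dn y x \<and> (dn x y = 0 \<longleftrightarrow> x = y)" if "x \<in> X n" "y \<in> X n" for x y
    using A[rule_format, OF mem[OF that(1)] mem[OF that(2)]] assms(2) that by auto
  have 2: "dn x z \<le> dn x y + dn y z" if "x \<in> X n" "y \<in> X n" "z \<in> X n" for x y z
    using B[rule_format, OF mem[OF that(1)] mem[OF that(2)] mem[OF that(3)]] assms(2) that by auto
  show ?thesis unfolding metric_on_def using 1 2 by blast
qed

lemma finite_bound:
  fixes f :: "'a \<Rightarrow> 'a \<Rightarrow> real"
  assumes "finite F"
  shows "\<exists>B. \<forall>p\<in>F. \<forall>q\<in>F. f p q \<le> B"
proof -
  have "\<forall>p\<in>F. \<forall>q\<in>F. f p q \<le> (\<Sum>z\<in>F \<times> F. \<bar>f (fst z) (snd z)\<bar>)"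
  proof (intro ballI)
    fix p q assume "p \<in> F" "q \<in> F"
    then have "\<bar>f (fst (p, q)) (snd (p, q))\<bar> \<le> (\<Sum>z\<in>F \<times> F. \<bar>f (fst z) (snd z)\<bar>)"
      by (intro member_le_sum) (use assms in auto)
    then show "f p q \<le> (\<Sum>z\<in>F \<times> F. \<bar>f (fst z) (snd z)\<bar>)" by simp
  qed
  then show ?thesis by blast
qed

theorem mainTheorem6:
  fixes m :: nat
    and V :: "nat \<Rightarrow> 'v set" and E :: "nat \<Rightarrow> 'e set"
    and s t :: "nat \<Rightarrow> 'e \<Rightarrow> 'v"
    and N :: "nat \<Rightarrow> nat"
    and d dQd :: "nat \<times> ('v \<times> ('e \<Rightarrow> int)) \<Rightarrow> nat \<times> ('v \<times> ('e \<Rightarrow> int)) \<Rightarrow> real"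
  assumes m: "m \<ge> 3"
    and wf: "\<And>n. mg_wf (V n) (E n) (s n) (t n)"
    and conn: "\<And>n. mg_connected (V n) (E n) (s n) (t n)"
    and conn2: "\<And>n. mg_2connected (V n) (E n) (s n) (t n)"
    and Ntrees: "\<And>n e. e \<in> E n \<Longrightarrow>
        card {T. mg_spanning_tree (V n) (E n) (s n) (t n) T \<and> e \<notin> T} = N n"
    and girth: "\<And>L::nat. \<exists>n0. \<forall>n\<ge>n0. enat L < mg_girth (E n) (s n) (t n)"
    and d: "coarse_disj_union_metric (\<lambda>n. hc_verts m (V n) (E n) (s n) (t n))
              (\<lambda>n. graph_dist (hc_adj m (V n) (E n) (s n) (t n))) d"
    and dQd: "coarse_disj_union_metric (\<lambda>n. hc_verts m (V n) (E n) (s n) (t n))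
              (\<lambda>n. dQ m (N n) (V n) (E n) (s n) (t n)) dQd"
  shows "coarse_embedding (disj_union (\<lambda>n. hc_verts m (V n) (E n) (s n) (t n))) d dQd id \<and>
         coarse_embedding (disj_union (\<lambda>n. hc_verts m (V n) (E n) (s n) (t n))) dQd d id"
proof -
  let ?X = "\<lambda>n. hc_verts m (V n) (E n) (s n) (t n)"
  let ?U = "disj_union ?X"
  let ?G = "\<lambda>n. graph_dist (hc_adj m (V n) (E n) (s n) (t n))"
  let ?Q = "\<lambda>n. dQ m (N n) (V n) (E n) (s n) (t n)"
  have m2: "m \<ge> 2" using m by simp
  note dU = d[unfolded coarse_disj_union_metric_def]
  note qU = dQd[unfolded coarse_disj_union_metric_def]
  have dm: "metric_on ?U d" by (rule conjunct1[OF dU])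
  have dr: "\<And>n. \<forall>x\<in>?X n. \<forall>y\<in>?X n. d (n, x) (n, y) = ?G n x y" using conjunct1[OF conjunct2[OF dU]] by blast
  have dsep: "\<And>R. \<exists>N0. \<forall>n n'. n \<noteq> n' \<and> (N0 \<le> n \<or> N0 \<le> n') \<longrightarrow> (\<forall>x\<in>?X n. \<forall>y\<in>?X n'. R \<le> d (n, x) (n', y))"
    using conjunct2[OF conjunct2[OF conjunct2[OF dU]]] by blast
  have qm: "metric_on ?U dQd" by (rule conjunct1[OF qU])
  have qr: "\<And>n. \<forall>x\<in>?X n. \<forall>y\<in>?X n. dQd (n, x) (n, y) = ?Q n x y" using conjunct1[OF conjunct2[OF qU]] by blast
  have qsep: "\<And>R. \<exists>N0. \<forall>n n'. n \<noteq> n' \<and> (N0 \<le> n \<or> N0 \<le> n') \<longrightarrow> (\<forall>x\<in>?X n. \<forall>y\<in>?X n'. R \<le> dQd (n, x) (n', y))"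
    using conjunct2[OF conjunct2[OF conjunct2[OF qU]]] by blast
  have memU: "\<And>p. p \<in> ?U \<longleftrightarrow> snd p \<in> ?X (fst p)" unfolding disj_union_def by auto
  have Qmet: "\<And>n. metric_on (?X n) (?Q n)" by (rule metric_restrict[OF qm qr])
  have Dmet: "\<And>n. metric_on (?X n) (?G n)" by (rule metric_restrict[OF dm dr])
  have K1: "\<And>n x y. x \<in> ?X n \<Longrightarrow> y \<in> ?X n \<Longrightarrow> ?Q n x y \<le> ?G n x y"
    by (rule comp_K1[OF m2 wf conn Ntrees Qmet])
  have K2: "\<exists>n0. \<forall>n\<ge>n0. \<forall>x\<in>?X n. \<forall>y\<in>?X n. ?Q n x y < real L \<longrightarrow> ?G n x y \<le> ?Q n x y" for L
  proof -
    obtain n0 where n0: "\<forall>n\<ge>n0. enat L < mg_girth (E n) (s n) (t n)" using girth by blast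
    show ?thesis
      by (rule exI[of _ n0]) (use comp_K2[OF m2 wf Ntrees Qmet Dmet] n0 in blast)
  qed
  have finF: "finite (SIGMA n:{..<M}. ?X n)" for M
    by (rule finite_SigmaI) (use finite_hc_verts[OF wf] in auto)
  have FU: "p \<in> (SIGMA n:{..<M}. ?X n) \<longleftrightarrow> p \<in> ?U \<and> fst p < M" for p M
    unfolding disj_union_def by (cases p) auto
  have nnd: "\<And>p q. p \<in> ?U \<Longrightarrow> q \<in> ?U \<Longrightarrow> 0 \<le> d p q" using dm unfolding metric_on_def by blast
  have nnq: "\<And>p q. p \<in> ?U \<Longrightarrow> q \<in> ?U \<Longrightarrow> 0 \<le> dQd p q" using qm unfolding metric_on_def by blast
  have B12: "\<exists>B. \<forall>p\<in>?U. \<forall>q\<in>?U. d p q \<le> R \<longrightarrow> dQd p q \<le> B" for R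
  proof -
    obtain N0 where N0: "\<forall>n n'. n \<noteq> n' \<and> (N0 \<le> n \<or> N0 \<le> n') \<longrightarrow> (\<forall>x\<in>?X n. \<forall>y\<in>?X n'. R + 1 \<le> d (n, x) (n', y))"
      using dsep by blast
    obtain B0 where B0: "\<forall>p\<in>(SIGMA n:{..<N0}. ?X n). \<forall>q\<in>(SIGMA n:{..<N0}. ?X n). dQd p q \<le> B0"
      using finite_bound[OF finF] by blast
    have "\<forall>p\<in>?U. \<forall>q\<in>?U. d p q \<le> R \<longrightarrow> dQd p q \<le> max R B0"
    proof (intro ballI impI)
      fix p q assume p: "p \<in> ?U" and q: "q \<in> ?U" and le: "d p q \<le> R"
      obtain n x where px: "p = (n, x)" by (cases p)
      obtain n' y where qy: "q = (n', y)" by (cases q)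
      have x: "x \<in> ?X n" and y: "y \<in> ?X n'" using p q px qy memU by auto
      show "dQd p q \<le> max R B0"
      proof (cases "n = n'")
        case True
        have "dQd p q = ?Q n x y" using qr x y True px qy by simp
        also have "\<dots> \<le> ?G n x y" using K1 x y True by simp
        also have "\<dots> = d p q" using dr x y True px qy by simp
        finally show ?thesis using le by simp
      next
        case False
        have "n < N0 \<and> n' < N0"
        proof (rule ccontr)
          assume "\<not> (n < N0 \<and> n' < N0)"
          then have "R + 1 \<le> d p q" using N0 False x y px qy by auto
          then show False using le by simp
        qed
        then have "p \<in> (SIGMA n:{..<N0}. ?X n)" "q \<in> (SIGMA n:{..<N0}. ?X n)" using FU p q px qy by auto
        then show ?thesis using B0 by fastforce
      qed
    qed
    then show ?thesis by blast
  qed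
  have B21: "\<exists>B. \<forall>p\<in>?U. \<forall>q\<in>?U. dQd p q \<le> R \<longrightarrow> d p q \<le> B" for R
  proof -
    define L where "L = nat \<lceil>R\<rceil> + 1"
    have RL: "R < real L" unfolding L_def by linarith
    obtain n0 where n0: "\<forall>n\<ge>n0. \<forall>x\<in>?X n. \<forall>y\<in>?X n. ?Q n x y < real L \<longrightarrow> ?G n x y \<le> ?Q n x y"
      using K2 by blast
    obtain N0 where N0: "\<forall>n n'. n \<noteq> n' \<and> (N0 \<le> n \<or> N0 \<le> n') \<longrightarrow> (\<forall>x\<in>?X n. \<forall>y\<in>?X n'. R + 1 \<le> dQd (n, x) (n', y))"
      using qsep by blast
    define M where "M = max n0 N0"
    obtain B0 where B0: "\<forall>p\<in>(SIGMA n:{..<M}. ?X n). \<forall>q\<in>(SIGMA n:{..<M}. ?X n). d p q \<le> B0"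
      using finite_bound[OF finF] by blast
    have "\<forall>p\<in>?U. \<forall>q\<in>?U. dQd p q \<le> R \<longrightarrow> d p q \<le> max R B0"
    proof (intro ballI impI)
      fix p q assume p: "p \<in> ?U" and q: "q \<in> ?U" and le: "dQd p q \<le> R"
      obtain n x where px: "p = (n, x)" by (cases p)
      obtain n' y where qy: "q = (n', y)" by (cases q)
      have x: "x \<in> ?X n" and y: "y \<in> ?X n'" using p q px qy memU by auto
      show "d p q \<le> max R B0"
      proof (cases "n = n' \<and> n0 \<le> n")
        case True
        have Qe: "dQd p q = ?Q n x y" using qr x y True px qy by simp
        have "?Q n x y < real L" using Qe le RL by simp
        then have "?G n x y \<le> ?Q n x y" using n0 True x y by auto
        moreover have "d p q = ?G n x y" using dr x y True px qy by simp
        ultimately show ?thesis using le Qe by simp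
      next
        case False
        have "n < M \<and> n' < M"
        proof (cases "n = n'")
          case True
          then show ?thesis using False unfolding M_def by auto
        next
          case neq: False
          have "n < N0 \<and> n' < N0"
          proof (rule ccontr)
            assume "\<not> (n < N0 \<and> n' < N0)"
            then have "R + 1 \<le> dQd p q" using N0 neq x y px qy by auto
            then show False using le by simp
          qed
          then show ?thesis unfolding M_def by auto
        qed
        then have "p \<in> (SIGMA n:{..<M}. ?X n)" "q \<in> (SIGMA n:{..<M}. ?X n)" using FU p q px qy by auto
        then show ?thesis using B0 by fastforce
      qed
    qed
    then show ?thesis by blast
  qed
  show ?thesis
  proof
    show "coarse_embedding ?U d dQd id" by (rule coarse_from_bounds[OF nnd nnq B12 B21])
    show "coarse_embedding ?U dQd d id" by (rule coarse_from_bounds[OF nnq nnd B21 B12])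
  qed
qed

end
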